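(* Let $\mathcal{U}\subseteq\mathbb{R}^K$ be convex and closed. Then the no-arbitrage subset $\mathcal{U}^{na}$ of $\mathcal{U}$ exists and equals $\mathcal{V}(\mathcal{U})\cap\mathcal{U}$, where \[\mathcal{V}(\mathcal{U})=\Big\{r\in\mathbb{R}^K:\ 0\in\mathcal{U},\ \Big(\textstyle\sum_{j=1}^ke_jr_j\in\mathcal{U}\Big)\vee\big(r_{1:k}\notin\mathcal{U}_{1:k}\big),\ \forall k=1,\dots,K-1\Big\},\] with $e_j\in\mathbb{R}^K$ the $j$-th column of the identity matrix, and $\mathcal{V}(\mathcal{U})=\emptyset$ if $0\notin\mathcal{U}$.
   Context: For $\mathcal{U}\subseteq\mathbb{R}^K$, history $\hat r_{1:k-1}\in\mathbb{R}^{k-1}$ and $1\le k\le k'\le K$, the projection is $\mathcal{U}_{k:k'}(\hat r_{1:k-1})=\{r\in\mathbb{R}^{k'-k+1}:\exists\bar r\in\mathbb{R}^{K-k'},\ [\hat r_{1:k-1};r;\bar r]\in\mathcal{U}\}$ (for $k'=K$: $[\hat r_{1:k-1};r]\in\mathcal{U}$); $\mathcal{U}_{1:k}$ denotes the projection onto the first $k$ coordinates. The worst-case risk measure with uncertainty set $\mathcal{U}$ is $\rho=\rho_0\circ\cdots\circ\rho_{K-1}$, with $\rho_k(X,r)=\sup_{r'\in\mathcal{U}:r'_{1:k}=r_{1:k}}X(r')$ if some $r'\in\mathcal{U}$ has $r'_{1:k}=r_{1:k}$, otherwise $\rho_k(X,r)=X([r_{1:k};0_{k+1:K}])$; $\rho_{k,K}=\rho_k\circ\cdots\circ\rho_{K-1}$.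 Investments $\zeta_\ell$ are functions of $r_{1:\ell}$. The set of returns with bounded conditional market risk is $\mathcal{A}(\mathcal{U})=\{r\in\mathbb{R}^K:\forall k\in\{0,\dots,K-1\},\ \inf_{\zeta_k,\dots,\zeta_{K-1}}\rho_{k,K}(-\sum_{\ell=k}^{K-1}\zeta_\ell r_{\ell+1},r)\in(-\infty,0]\}$ (here $\rho_{k,K}$ uses $\mathcal{U}$). The no-arbitrage subset $\mathcal{U}^{na}$ of $\mathcal{U}$ is the largest $\mathcal{U}'\subseteq\mathcal{U}$ with $\mathcal{U}'\subseteq\mathcal{A}(\mathcal{U}')$, i.e. $\mathcal{U}^{na}\subseteq\mathcal{A}(\mathcal{U}^{na})$ and every $\mathcal{U}'\subseteq\mathcal{U}$ with $\mathcal{U}'\subseteq\mathcal{A}(\mathcal{U}')$ satisfies $\mathcal{U}'\subseteq\mathcal{U}^{na}$. *)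

theory Defs
  imports "HOL-Analysis.Analysis"
begin

text \<open>Vectors of R^K are encoded as functions nat => real indexed by 1..K and
  vanishing outside {1..K}.\<close>

definition RK :: "nat \<Rightarrow> (nat \<Rightarrow> real) set" where
  "RK K = {r. \<forall>i. (i < 1 \<or> K < i) \<longrightarrow> r i = 0}"

text \<open>Truncation r_{1:k}, i.e. [r_{1:k}; 0] (also equal to sum_{j=1}^k e_j r_j).\<close>
definition trunc :: "nat \<Rightarrow> (nat \<Rightarrow> real) \<Rightarrow> (nat \<Rightarrow> real)" where
  "trunc k r = (\<lambda>i. if 1 \<le> i \<and> i \<le> k then r i else 0)"

definition unitv :: "nat \<Rightarrow> (nat \<Rightarrow> real)" where
  "unitv j = (\<lambda>i. if i = j then 1 else 0)"

text \<open>Projection U_{1:k} of U onto the first k coordinates (R^k embedded as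
  functions supported in {1..k}).\<close>
definition proj_first :: "(nat \<Rightarrow> real) set \<Rightarrow> nat \<Rightarrow> (nat \<Rightarrow> real) set" where
  "proj_first U k = {s. \<exists>u\<in>U. trunc k u = s}"

definition convex_set :: "(nat \<Rightarrow> real) set \<Rightarrow> bool" where
  "convex_set U \<longleftrightarrow> (\<forall>x\<in>U. \<forall>y\<in>U. \<forall>t::real. 0 \<le> t \<and> t \<le> 1 \<longrightarrow>
      (\<lambda>i. (1 - t) * x i + t * y i) \<in> U)"

definition rho :: "(nat \<Rightarrow> real) set \<Rightarrow> nat \<Rightarrow> ((nat \<Rightarrow> real) \<Rightarrow> ereal) \<Rightarrow> (nat \<Rightarrow> real) \<Rightarrow> ereal" where
  "rho U k X r =
     (if \<exists>r'\<in>U. \<forall>i\<in>{1..k}. r' i = r i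
      then (SUP r'\<in>{r'\<in>U. \<forall>i\<in>{1..k}. r' i = r i}. X r')
      else X (trunc k r))"

definition rho_from :: "(nat \<Rightarrow> real) set \<Rightarrow> nat \<Rightarrow> nat \<Rightarrow> ((nat \<Rightarrow> real) \<Rightarrow> ereal) \<Rightarrow> (nat \<Rightarrow> real) \<Rightarrow> ereal" where
  "rho_from U K k X = foldr (\<lambda>j Y. rho U j Y) [k..<K] X"

definition adapted :: "nat \<Rightarrow> nat \<Rightarrow> (nat \<Rightarrow> (nat \<Rightarrow> real) \<Rightarrow> real) \<Rightarrow> bool" where
  "adapted k K \<zeta> \<longleftrightarrow> (\<forall>l\<in>{k..<K}. \<forall>r r'. (\<forall>i\<in>{1..l}. r i = r' i) \<longrightarrow> \<zeta> l r = \<zeta> l r')"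

definition A_set :: "nat \<Rightarrow> (nat \<Rightarrow> real) set \<Rightarrow> (nat \<Rightarrow> real) set" where
  "A_set K U = {r \<in> RK K. \<forall>k<K.
     (let v = (INF \<zeta>\<in>{\<zeta>. adapted k K \<zeta>}.
                 rho_from U K k (\<lambda>r'. ereal (- (\<Sum>l\<in>{k..<K}. \<zeta> l r' * r' (l + 1)))) r)
      in -\<infinity> < v \<and> v \<le> 0)}"

definition is_no_arbitrage_subset :: "nat \<Rightarrow> (nat \<Rightarrow> real) set \<Rightarrow> (nat \<Rightarrow> real) set \<Rightarrow> bool" where
  "is_no_arbitrage_subset K U W \<longleftrightarrow>
     W \<subseteq> U \<and> W \<subseteq> A_set K W \<and> (\<forall>U'. U' \<subseteq> U \<and> U' \<subseteq> A_set K U' \<longrightarrow> U' \<subseteq> W)"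

definition V_set :: "nat \<Rightarrow> (nat \<Rightarrow> real) set \<Rightarrow> (nat \<Rightarrow> real) set" where
  "V_set K U = {r \<in> RK K. (\<lambda>_. 0) \<in> U \<and>
     (\<forall>k\<in>{1..K-1}. (\<lambda>i. \<Sum>j\<in>{1..k}. r j * unitv j i) \<in> U \<or> trunc k r \<notin> proj_first U k)}"

end

theory Submission
  imports Defs
begin

definition dep :: "nat \<Rightarrow> ((nat \<Rightarrow> real) \<Rightarrow> ereal) \<Rightarrow> bool" where
  "dep m Y \<longleftrightarrow> (\<forall>r1 r2. (\<forall>i\<in>{1..m}. r1 i = r2 i) \<longrightarrow> Y r1 = Y r2)"

lemma rho_dep:
  assumes "dep m Y" "m \<le> l"
  shows "rho U l Y = Y"
proof
  fix r
  show "rho U l Y r = Y r"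
  proof (cases "\<exists>r'\<in>U. \<forall>i\<in>{1..l}. r' i = r i")
    case True
    have eq: "\<And>r'. r' \<in> {r'\<in>U. \<forall>i\<in>{1..l}. r' i = r i} \<Longrightarrow> Y r' = Y r"
      using assms unfolding dep_def by auto
    have ne: "{r'\<in>U. \<forall>i\<in>{1..l}. r' i = r i} \<noteq> {}" using True by auto
    have "(SUP r'\<in>{r'\<in>U. \<forall>i\<in>{1..l}. r' i = r i}. Y r') = Y r"
    proof -
      have "(SUP r'\<in>{r'\<in>U. \<forall>i\<in>{1..l}. r' i = r i}. Y r') = (SUP r'\<in>{r'\<in>U. \<forall>i\<in>{1..l}. r' i = r i}. Y r)"
        by (rule SUP_cong) (auto simp: eq)
      then show ?thesis using ne by simp
    qed
    then show ?thesis using True unfolding rho_def by simp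
  next
    case False
    have "Y (trunc l r) = Y r" using assms unfolding dep_def trunc_def by auto
    then show ?thesis using False unfolding rho_def by (subst if_not_P) auto
  qed
qed

lemma foldr_dep:
  assumes "dep m Y" "\<forall>j\<in>set xs. m \<le> j"
  shows "foldr (\<lambda>j Y. rho U j Y) xs Y = Y"
  using assms(2)
proof (induction xs)
  case Nil then show ?case by simp
next
  case (Cons a xs)
  then show ?case using rho_dep[OF assms(1)] by simp
qed

lemma rho_from_dep:
  assumes "dep m Y" "m \<le> k"
  shows "rho_from U K k Y = Y"
  unfolding rho_from_def using foldr_dep[OF assms(1)] assms(2) by simp

lemma rho_from_step:
  assumes "j < K"
  shows "rho_from U K j X = rho U j (rho_from U K (Suc j) X)"
  unfolding rho_from_def using assms by (simp add: upt_conv_Cons)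

lemma trunc_trunc: "trunc k (trunc j r) = trunc (min k j) r"
  unfolding trunc_def by auto

lemma trunc_RK: "r \<in> RK K \<Longrightarrow> trunc K r = r"
  unfolding trunc_def RK_def by (auto simp: not_le)

lemma sum_unitv: "(\<lambda>i. \<Sum>j\<in>{1..k}. r j * unitv j i) = trunc k r"
proof
  fix i
  show "(\<Sum>j\<in>{1..k}. r j * unitv j i) = trunc k r i"
    unfolding unitv_def trunc_def
    by (simp add: if_distrib sum.delta' cong: if_cong)
qed

lemma rho_from_lower:
  assumes W: "\<forall>r\<in>W. \<forall>j<K. trunc j r \<in> W" "W \<subseteq> RK K"
    and "j \<le> K"
  shows "\<forall>r\<in>W. X (trunc j r) \<le> rho_from W K j X r"
  using assms(3)
proof (induction j rule: inc_induct)
  case base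
  show ?case using W(2) by (auto simp: rho_from_def trunc_RK)
next
  case (step n)
  show ?case
  proof
    fix r assume r: "r \<in> W"
    let ?S = "{r'\<in>W. \<forall>i\<in>{1..n}. r' i = r i}"
    have tr: "trunc n r \<in> ?S" using W(1) r step(2) by (auto simp: trunc_def)
    have "X (trunc n r) = X (trunc (Suc n) (trunc n r))" by (simp add: trunc_trunc)
    also have "\<dots> \<le> rho_from W K (Suc n) X (trunc n r)"
      using step(3) tr by auto
    also have "\<dots> \<le> (SUP r'\<in>?S. rho_from W K (Suc n) X r')"
      using tr by (rule SUP_upper)
    also have "\<dots> = rho W n (rho_from W K (Suc n) X) r"
      unfolding rho_def using r by (subst if_P) auto
    also have "\<dots> = rho_from W K n X r" using rho_from_step[OF step(2)] by simp
    finally show "X (trunc n r) \<le> rho_from W K n X r" .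
  qed
qed

lemma conv_zero:
  fixes T :: "real set"
  assumes "closed T" "\<forall>x\<in>T. \<forall>y\<in>T. \<forall>s. 0 \<le> s \<and> s \<le> 1 \<longrightarrow> (1 - s) * x + s * y \<in> T"
    and "T0 \<subseteq> T" "T0 \<noteq> {}"
    and pos: "\<not> (\<exists>e>0. \<forall>t\<in>T0. e \<le> t)"
    and neg: "\<not> (\<exists>e>0. \<forall>t\<in>T0. t \<le> - e)"
  shows "0 \<in> T"
proof (cases "(\<exists>t\<in>T. t \<le> 0) \<and> (\<exists>t\<in>T. 0 \<le> t)")
  case True
  then obtain a b where ab: "a \<in> T" "b \<in> T" "a \<le> 0" "0 \<le> b" by auto
  show ?thesis
  proof (cases "a = b")
    case True then show ?thesis using ab by auto
  next
    case False
    then have d: "b - a > 0" using ab by auto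
    define s where "s = - a / (b - a)"
    have s: "0 \<le> s" "s \<le> 1" using ab d by (auto simp: s_def field_simps)
    have "(1 - s) * a + s * b = 0" using d by (simp add: s_def field_simps)
    then show ?thesis using assms(2) ab s by metis
  qed
next
  case False
  then have "(\<forall>t\<in>T. 0 < t) \<or> (\<forall>t\<in>T. t < 0)" by auto
  then show ?thesis
  proof
    assume P: "\<forall>t\<in>T. 0 < t"
    have ne: "T \<noteq> {}" using assms(3,4) by auto
    have bdd: "bdd_below T" using P by (auto intro!: bdd_belowI[of _ 0] less_imp_le)
    have "Inf T \<in> T" by (rule closed_contains_Inf[OF ne bdd assms(1)])
    then have "Inf T > 0" using P by auto
    moreover have "\<forall>t\<in>T0. Inf T \<le> t" using assms(3) bdd by (auto intro: cInf_lower)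
    ultimately show ?thesis using pos by auto
  next
    assume P: "\<forall>t\<in>T. t < 0"
    have ne: "T \<noteq> {}" using assms(3,4) by auto
    have bdd: "bdd_above T" using P by (auto intro!: bdd_aboveI[of _ 0] less_imp_le)
    have "Sup T \<in> T" by (rule closed_contains_Sup[OF ne bdd assms(1)])
    then have "Sup T < 0" using P by auto
    moreover have "\<forall>t\<in>T0. t \<le> - (- Sup T)" using assms(3) bdd by (auto intro: cSup_upper)
    ultimately show ?thesis using neg by (metis neg_0_less_iff_less)
  qed
qed

lemma val_c:
  assumes "r \<in> U'" "n < K"
  shows "rho_from U' K n (\<lambda>r'. ereal (- (\<Sum>l\<in>{n..<K}. (\<lambda>l (_::nat\<Rightarrow>real). if l = n then c else 0) l r' * r' (l + 1)))) r
     = (SUP r'\<in>{r'\<in>U'. \<forall>i\<in>{1..n}. r' i = r i}. ereal (- (c * r' (Suc n))))"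
proof -
  have X: "(\<lambda>r'. ereal (- (\<Sum>l\<in>{n..<K}. (\<lambda>l (_::nat\<Rightarrow>real). if l = n then c else 0) l r' * r' (l + 1))))
     = (\<lambda>r'. ereal (- (c * r' (Suc n))))"
  proof
    fix r' :: "nat \<Rightarrow> real"
    have "(\<Sum>l\<in>{n..<K}. (if l = n then c else 0) * r' (l + 1)) = (\<Sum>l\<in>{n..<K}. if l = n then c * r' (l + 1) else 0)"
      by (rule sum.cong) auto
    also have "\<dots> = c * r' (Suc n)" using assms(2) by (subst sum.delta) auto
    finally have "(\<Sum>l\<in>{n..<K}. (if l = n then c else 0) * r' (l + 1)) = c * r' (Suc n)" .
    then show "ereal (- (\<Sum>l\<in>{n..<K}. (\<lambda>l (_::nat\<Rightarrow>real). if l = n then c else 0) l r' * r' (l + 1))) = ereal (- (c * r' (Suc n)))"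
      by simp
  qed
  have d: "dep (Suc n) (\<lambda>r'. ereal (- (c * r' (Suc n))))" unfolding dep_def by auto
  show ?thesis unfolding X
    unfolding rho_from_step[OF assms(2)] rho_from_dep[OF d order.refl]
    unfolding rho_def using assms(1) by (subst if_P) auto
qed

lemma noarb:
  assumes r: "r \<in> U'" and A: "U' \<subseteq> A_set K U'" and n: "n < K"
  defines "T0 \<equiv> (\<lambda>r'. r' (Suc n)) ` {r'\<in>U'. \<forall>i\<in>{1..n}. r' i = r i}"
  shows "\<not> (\<exists>e>0. \<forall>t\<in>T0. e \<le> t)" "\<not> (\<exists>e>0. \<forall>t\<in>T0. t \<le> - e)"
proof -
  let ?S = "{r'\<in>U'. \<forall>i\<in>{1..n}. r' i = r i}"
  define v where "v = (INF \<zeta>\<in>{\<zeta>. adapted n K \<zeta>}.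
                 rho_from U' K n (\<lambda>r'. ereal (- (\<Sum>l\<in>{n..<K}. \<zeta> l r' * r' (l + 1)))) r)"
  have "r \<in> A_set K U'" using A r by auto
  then have v: "-\<infinity> < v" "v \<le> 0" using n unfolding A_set_def v_def Let_def by auto
  then obtain m where m: "v = ereal m" by (cases v) auto
  have key: "v \<le> (SUP r'\<in>?S. ereal (- (c * r' (Suc n))))" for c
  proof -
    have ad: "adapted n K (\<lambda>l (_::nat\<Rightarrow>real). if l = n then c else 0)"
      unfolding adapted_def by auto
    have "v \<le> rho_from U' K n (\<lambda>r'. ereal (- (\<Sum>l\<in>{n..<K}. (\<lambda>l (_::nat\<Rightarrow>real). if l = n then c else 0) l r' * r' (l + 1)))) r"
      unfolding v_def by (rule INF_lower) (use ad in simp)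
    then show ?thesis using val_c[OF r n] by simp
  qed
  show "\<not> (\<exists>e>0. \<forall>t\<in>T0. e \<le> t)"
  proof
    assume "\<exists>e>0. \<forall>t\<in>T0. e \<le> t"
    then obtain e where e: "e > 0" "\<forall>t\<in>T0. e \<le> t" by auto
    define c where "c = (\<bar>m\<bar> + 1) / e"
    have c: "c > 0" "c * e = \<bar>m\<bar> + 1" using e by (auto simp: c_def)
    have sb: "(SUP r'\<in>?S. ereal (- (c * r' (Suc n)))) \<le> ereal (- (\<bar>m\<bar> + 1))"
    proof (rule SUP_least)
      fix r' assume "r' \<in> ?S"
      then have "e \<le> r' (Suc n)" using e unfolding T0_def by auto
      then have "c * e \<le> c * r' (Suc n)" using c by (intro mult_left_mono) auto
      then show "ereal (- (c * r' (Suc n))) \<le> ereal (- (\<bar>m\<bar> + 1))" using c by simp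
    qed
    have "ereal m \<le> ereal (- (\<bar>m\<bar> + 1))" using order.trans[OF key[of c] sb] m by simp
    then show False by simp
  qed
  show "\<not> (\<exists>e>0. \<forall>t\<in>T0. t \<le> - e)"
  proof
    assume "\<exists>e>0. \<forall>t\<in>T0. t \<le> - e"
    then obtain e where e: "e > 0" "\<forall>t\<in>T0. t \<le> - e" by auto
    define c where "c = - (\<bar>m\<bar> + 1) / e"
    have c: "c < 0" "c * e = - (\<bar>m\<bar> + 1)" using e by (auto simp: c_def divide_neg_pos)
    have sb: "(SUP r'\<in>?S. ereal (- (c * r' (Suc n)))) \<le> ereal (- (\<bar>m\<bar> + 1))"
    proof (rule SUP_least)
      fix r' assume "r' \<in> ?S"
      then have "r' (Suc n) \<le> - e" using e unfolding T0_def by auto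
      then have "c * (- e) \<le> c * r' (Suc n)" using c by (intro mult_left_mono_neg) auto
      then show "ereal (- (c * r' (Suc n))) \<le> ereal (- (\<bar>m\<bar> + 1))" using c by simp
    qed
    have "ereal m \<le> ereal (- (\<bar>m\<bar> + 1))" using order.trans[OF key[of c] sb] m by simp
    then show False by simp
  qed
qed

lemma trunc_in_U:
  assumes sub: "U' \<subseteq> U" and A: "U' \<subseteq> A_set K U'" and cv: "convex_set U" and cl: "closed U"
    and "j \<le> K"
  shows "\<forall>r\<in>U'. trunc j r \<in> U"
  using assms(5)
proof (induction j rule: inc_induct)
  case base
  have "U' \<subseteq> RK K" using A unfolding A_set_def by auto
  then show ?case using sub trunc_RK by (metis subsetD)
next
  case (step n)
  show ?case
  proof
    fix r assume r: "r \<in> U'"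
    define p where "p = (\<lambda>t::real. (\<lambda>i. if i = Suc n then t else trunc n r i))"
    define T where "T = p -` U"
    define T0 where "T0 = (\<lambda>r'. r' (Suc n)) ` {r'\<in>U'. \<forall>i\<in>{1..n}. r' i = r i}"
    have cont: "continuous_on UNIV p" unfolding p_def
      apply (intro continuous_on_coordinatewise_then_product)
      subgoal for i by (cases "i = Suc n") (auto intro: continuous_intros)
      done
    have clT: "closed T" unfolding T_def
      by (rule continuous_closed_vimage[OF cl])
        (use cont in \<open>simp add: continuous_on_eq_continuous_at\<close>)
    have cvT: "\<forall>x\<in>T. \<forall>y\<in>T. \<forall>s. 0 \<le> s \<and> s \<le> 1 \<longrightarrow> (1 - s) * x + s * y \<in> T"
    proof (intro ballI allI impI)
      fix x y s :: real assume xy: "x \<in> T" "y \<in> T" and s: "0 \<le> s \<and> s \<le> 1"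
      have "(\<lambda>i. (1 - s) * p x i + s * p y i) \<in> U"
        using cv xy s unfolding convex_set_def T_def by auto
      moreover have "(\<lambda>i. (1 - s) * p x i + s * p y i) = p ((1 - s) * x + s * y)"
        unfolding p_def by (auto simp: algebra_simps)
      ultimately show "(1 - s) * x + s * y \<in> T" unfolding T_def by simp
    qed
    have T0T: "T0 \<subseteq> T"
    proof
      fix t assume "t \<in> T0"
      then obtain r' where r': "r' \<in> U'" "\<forall>i\<in>{1..n}. r' i = r i" "t = r' (Suc n)"
        unfolding T0_def by auto
      have "p t = trunc (Suc n) r'"
        unfolding p_def trunc_def using r' by auto
      then show "t \<in> T" using step(3) r'(1) unfolding T_def by simp
    qed
    have ne: "T0 \<noteq> {}" using r unfolding T0_def by auto
    have "0 \<in> T"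
      by (rule conv_zero[OF clT cvT T0T ne])
        (use noarb[OF r A step(2)] in \<open>simp_all add: T0_def\<close>)
    moreover have "p 0 = trunc n r" unfolding p_def trunc_def by auto
    ultimately show "trunc n r \<in> U" unfolding T_def by simp
  qed
qed

theorem theorem1:
  fixes K :: nat and U :: "(nat \<Rightarrow> real) set"
  assumes "U \<subseteq> RK K"
    and "convex_set U"
    and "closed U"
  shows "is_no_arbitrage_subset K U (V_set K U \<inter> U)"
proof -
  define W where "W = V_set K U \<inter> U"
  have Wchar: "W = {r\<in>U. (\<lambda>_. 0) \<in> U \<and> (\<forall>k\<in>{1..K-1}. trunc k r \<in> U)}"
    using assms(1) unfolding W_def V_set_def sum_unitv proj_first_def by auto
  have trW: "\<forall>r\<in>W. \<forall>j<K. trunc j r \<in> W"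
  proof (intro ballI allI impI)
    fix r j assume r: "r \<in> W" and j: "j < K"
    have gen: "trunc k r \<in> U" if "k < K" for k
    proof (cases "k = 0")
      case True
      then have "trunc k r = (\<lambda>_. 0)" by (auto simp: trunc_def)
      then show ?thesis using r Wchar by auto
    next
      case False
      then show ?thesis using r Wchar that by auto
    qed
    show "trunc j r \<in> W" unfolding Wchar
      using gen[OF j] r Wchar j by (auto simp: trunc_trunc intro!: gen)
  qed
  have WRK: "W \<subseteq> RK K" using assms(1) Wchar by auto
  have WA: "W \<subseteq> A_set K W"
  proof
    fix r assume r: "r \<in> W"
    show "r \<in> A_set K W" unfolding A_set_def Let_def
    proof (intro CollectI conjI allI impI)
      show "r \<in> RK K" using r WRK by auto
      fix k assume k: "k < K"
      let ?v = "(INF \<zeta>\<in>{\<zeta>. adapted k K \<zeta>}.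
                 rho_from W K k (\<lambda>r'. ereal (- (\<Sum>l\<in>{k..<K}. \<zeta> l r' * r' (l + 1)))) r)"
      have "0 \<le> ?v"
      proof (rule INF_greatest)
        fix \<zeta> :: "nat \<Rightarrow> (nat \<Rightarrow> real) \<Rightarrow> real"
        let ?X = "(\<lambda>r'. ereal (- (\<Sum>l\<in>{k..<K}. \<zeta> l r' * r' (l + 1))))"
        have "?X (trunc k r) \<le> rho_from W K k ?X r"
          using rho_from_lower[OF trW WRK, of k ?X] k r by auto
        moreover have "?X (trunc k r) = 0" unfolding trunc_def by simp
        ultimately show "0 \<le> rho_from W K k ?X r" by (simp add: zero_ereal_def)
      qed
      then show "- \<infinity> < ?v" by auto
      have ad: "adapted k K (\<lambda>_ _. 0)" unfolding adapted_def by auto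
      have d: "dep 0 (\<lambda>r'. ereal (- (\<Sum>l\<in>{k..<K}. (\<lambda>(_::nat) (_::nat\<Rightarrow>real). 0::real) l r' * r' (l + 1))))"
        unfolding dep_def by simp
      have "?v \<le> rho_from W K k (\<lambda>r'. ereal (- (\<Sum>l\<in>{k..<K}. (\<lambda>(_::nat) (_::nat\<Rightarrow>real). 0::real) l r' * r' (l + 1)))) r"
        by (rule INF_lower) (use ad in simp)
      also have "\<dots> = rho_from W K k (\<lambda>_. ereal 0) r" by simp
      also have "\<dots> = 0"
      proof -
        have d0: "dep 0 (\<lambda>_. ereal 0)" unfolding dep_def by simp
        show ?thesis using rho_from_dep[OF d0, of k W K] by (simp add: zero_ereal_def)
      qed
      finally show "?v \<le> 0" .
    qed
  qed
  have max: "U' \<subseteq> W" if "U' \<subseteq> U \<and> U' \<subseteq> A_set K U'" for U'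
  proof
    fix r assume r: "r \<in> U'"
    have all: "\<forall>j\<le>K. trunc j r \<in> U"
      using trunc_in_U[of U' U K] that assms(2,3) r by auto
    have "trunc 0 r = (\<lambda>_. 0)" by (auto simp: trunc_def)
    then have "(\<lambda>_. 0) \<in> U" using all by (metis le0)
    then show "r \<in> W" unfolding Wchar using all r that by auto
  qed
  show ?thesis unfolding is_no_arbitrage_subset_def W_def[symmetric]
    using WA max Wchar by auto
qed

end
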